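(* Let $R$ be a commutative ring endowed with a translation-invariant partial order $\le$ on its additive group such that $R^+$ is stable under multiplication with squares, i.e. $r^2s\in R^+$ for all $r\in R$, $s\in R^+$. If $R$ is archimedean and localizable, then $pq\in R^+$ for all $p,q\in R^+$ (so $R$ is a partially ordered commutative ring).
   Context: Rings are commutative with unit $1$; $\mathbb{N}=\{1,2,\dots\}$. Translation-invariant means $r\le s$ implies $r+t\le s+t$; $R^+=\{r:0\le r\}$. A partially ordered commutative ring is such a ring whose positive cone is closed under multiplication and contains all squares. $R$ is archimedean if whenever $g,h\in R$ satisfy $kg+h\in R^+$ for all $k\in\mathbb{N}$, then $g\in R^+$. $\mathrm{Loc}(R)$ is the set of $s\in 1+R^+$ such that for all $r\in R$, $rs\in R^+$ implies $r\in R^+$. $R$ is localizable if for every $r\in R$ there exists $s\in\mathrm{Loc}(R)$ with $-s\le r\le s$. *)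

theory Defs
  imports Main
begin

definition pos_cone :: "('a::comm_ring_1 \<Rightarrow> 'a \<Rightarrow> bool) \<Rightarrow> 'a set" where
  "pos_cone le = {r. le 0 r}"

definition partial_order_rel :: "('a \<Rightarrow> 'a \<Rightarrow> bool) \<Rightarrow> bool" where
  "partial_order_rel le \<longleftrightarrow> (\<forall>x. le x x) \<and> (\<forall>x y. le x y \<longrightarrow> le y x \<longrightarrow> x = y)
     \<and> (\<forall>x y z. le x y \<longrightarrow> le y z \<longrightarrow> le x z)"

definition translation_invariant :: "('a::comm_ring_1 \<Rightarrow> 'a \<Rightarrow> bool) \<Rightarrow> bool" where
  "translation_invariant le \<longleftrightarrow> (\<forall>r s t. le r s \<longrightarrow> le (r + t) (s + t))"

definition archimedean_rel :: "('a::comm_ring_1 \<Rightarrow> 'a \<Rightarrow> bool) \<Rightarrow> bool" where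
  "archimedean_rel le \<longleftrightarrow> (\<forall>g h. (\<forall>k::nat. k \<ge> 1 \<longrightarrow> of_nat k * g + h \<in> pos_cone le)
      \<longrightarrow> g \<in> pos_cone le)"

definition Loc :: "('a::comm_ring_1 \<Rightarrow> 'a \<Rightarrow> bool) \<Rightarrow> 'a set" where
  "Loc le = {s. s - 1 \<in> pos_cone le \<and> (\<forall>r. r * s \<in> pos_cone le \<longrightarrow> r \<in> pos_cone le)}"

definition localizable :: "('a::comm_ring_1 \<Rightarrow> 'a \<Rightarrow> bool) \<Rightarrow> bool" where
  "localizable le \<longleftrightarrow> (\<forall>r. \<exists>s \<in> Loc le. le (- s) r \<and> le r s)"

end

theory Submission
  imports Defs
begin

locale prc =
  fixes le :: "'a::comm_ring_1 \<Rightarrow> 'a \<Rightarrow> bool"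
  assumes po: "partial_order_rel le"
    and ti: "translation_invariant le"
    and sqp: "\<forall>r s. s \<in> pos_cone le \<longrightarrow> r^2 * s \<in> pos_cone le"
    and ar: "archimedean_rel le"
    and lz: "localizable le"
begin

abbreviation pos :: "'a \<Rightarrow> bool" where "pos x \<equiv> x \<in> pos_cone le"

lemma pos_iff: "pos x \<longleftrightarrow> le 0 x" by (simp add: pos_cone_def)

lemma trans_le: "le x y \<Longrightarrow> le y z \<Longrightarrow> le x z"
  using po unfolding partial_order_rel_def by blast

lemma add_pos: "pos a \<Longrightarrow> pos b \<Longrightarrow> pos (a + b)"
proof -
  assume a: "pos a" and b: "pos b"
  from a ti have "le (0 + b) (a + b)" unfolding translation_invariant_def pos_iff by blast
  with b show ?thesis unfolding pos_iff using trans_le by simp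
qed

lemma le_iff: "le x y \<longleftrightarrow> pos (y - x)"
proof
  assume "le x y"
  with ti have "le (x + (-x)) (y + (-x))" unfolding translation_invariant_def by blast
  then show "pos (y - x)" unfolding pos_iff by simp
next
  assume "pos (y - x)"
  with ti have "le (0 + x) (y - x + x)" unfolding translation_invariant_def pos_iff by blast
  then show "le x y" by simp
qed

lemma sq_pos: "pos s \<Longrightarrow> pos (r * r * s)"
  using sqp by (metis power2_eq_square)

lemma one_pos: "pos 1"
proof -
  from lz obtain s where s: "s \<in> Loc le" "le (-s) 0" "le 0 s"
    unfolding localizable_def by blast
  then have "pos (1 * s)" unfolding pos_iff by simp
  with s(1) show ?thesis unfolding Loc_def by blast
qed

lemma square_pos: "pos (r * r)"
  using sq_pos[OF one_pos, of r] by simp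

lemma Loc_pos: "s \<in> Loc le \<Longrightarrow> pos s"
proof -
  assume "s \<in> Loc le"
  then have "pos (s - 1)" unfolding Loc_def by blast
  from add_pos[OF this one_pos] show ?thesis by simp
qed

lemma Loc_refl: "s \<in> Loc le \<Longrightarrow> pos (r * s) \<Longrightarrow> pos r"
  unfolding Loc_def by blast

lemma Loc_mult_pos: "s \<in> Loc le \<Longrightarrow> pos x \<Longrightarrow> pos (x * s)"
proof -
  assume s: "s \<in> Loc le" and x: "pos x"
  have "pos (s * s * x)" using sq_pos[OF x] .
  then have "pos ((x * s) * s)" by (simp add: algebra_simps)
  with s show ?thesis using Loc_refl by blast
qed

lemma Loc_mult: "s \<in> Loc le \<Longrightarrow> t \<in> Loc le \<Longrightarrow> s * t \<in> Loc le"
proof -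
  assume s: "s \<in> Loc le" and t: "t \<in> Loc le"
  have "pos ((s - 1) * t)" using Loc_mult_pos[OF t] s unfolding Loc_def by blast
  moreover have "pos (t - 1)" using t unfolding Loc_def by blast
  ultimately have "pos ((s - 1) * t + (t - 1))" by (rule add_pos)
  then have "pos (s * t - 1)" by (simp add: algebra_simps)
  moreover have "pos r" if "pos (r * (s * t))" for r
  proof -
    from that have "pos ((r * s) * t)" by (simp add: algebra_simps)
    with t have "pos (r * s)" by (rule Loc_refl)
    with s show ?thesis by (rule Loc_refl)
  qed
  ultimately show ?thesis unfolding Loc_def by blast
qed

lemma nat_pos: "pos x \<Longrightarrow> pos (of_nat n * x)"
proof (induction n)
  case 0
  then show ?case using square_pos[of 0] by simp
next
  case (Suc n)
  then have "pos (of_nat n * x + x)" using add_pos by blast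
  then show ?case by (simp add: algebra_simps)
qed

lemma torsion: "1 \<le> m \<Longrightarrow> pos (of_nat m * r) \<Longrightarrow> pos r"
proof -
  assume m: "1 \<le> m" and mr: "pos (of_nat m * r)"
  from lz obtain t where t: "t \<in> Loc le" "le (-t) r" "le r t"
    unfolding localizable_def by blast
  have rt: "pos (r + t)" using t(2) le_iff by simp
  have tp: "pos t" using Loc_pos[OF t(1)] .
  have "of_nat k * r + of_nat m * t \<in> pos_cone le" if "k \<ge> 1" for k :: nat
  proof -
    have lt: "k mod m \<le> m" using m by (simp add: less_imp_le_nat)
    have eq: "(of_nat k :: 'a) = of_nat (k div m) * of_nat m + of_nat (k mod m)"
      by (metis div_mult_mod_eq of_nat_add of_nat_mult)
    have eq2: "(of_nat (m - k mod m) :: 'a) = of_nat m - of_nat (k mod m)"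
      using lt by (simp add: of_nat_diff)
    have "of_nat k * r + of_nat m * t = of_nat (k div m) * (of_nat m * r) + of_nat (k mod m) * (r + t) + of_nat (m - k mod m) * t"
      unfolding eq eq2 by (simp add: algebra_simps)
    moreover have "pos (of_nat (k div m) * (of_nat m * r) + of_nat (k mod m) * (r + t) + of_nat (m - k mod m) * t)"
      using add_pos nat_pos mr rt tp by metis
    ultimately show ?thesis by simp
  qed
  with ar show ?thesis unfolding archimedean_rel_def by blast
qed

lemma lemmaA: "pos x \<Longrightarrow> pos y \<Longrightarrow> x + y \<in> Loc le \<Longrightarrow> pos (x * y)"
proof -
  assume x: "pos x" and y: "pos y" and L: "x + y \<in> Loc le"
  have "pos (x * x * y + y * y * x)" using add_pos sq_pos x y by blast
  then have "pos ((x * y) * (x + y))" by (simp add: algebra_simps)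
  with L show ?thesis by (rule Loc_refl)
qed

lemma lemmaA2: "pos x \<Longrightarrow> pos y \<Longrightarrow> C \<in> Loc le \<Longrightarrow> x + y = 2 * C \<Longrightarrow> pos (x * y)"
proof -
  assume x: "pos x" and y: "pos y" and L: "C \<in> Loc le" and e: "x + y = 2 * C"
  have "pos (x * x * y + y * y * x)" using add_pos sq_pos x y by blast
  also have "x * x * y + y * y * x = (x * y) * (x + y)" by (simp add: algebra_simps)
  also have "\<dots> = of_nat 2 * ((x * y) * C)" using e by (simp add: algebra_simps)
  finally have "pos ((x * y) * C)" using torsion[of 2] by simp
  with L show ?thesis by (rule Loc_refl)
qed

lemma base: "pos a \<Longrightarrow> pos (A - a) \<Longrightarrow> A \<in> Loc le \<Longrightarrow> pos b \<Longrightarrow> pos (B - b) \<Longrightarrow> B \<in> Loc le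
   \<Longrightarrow> pos (4 * (a * b) + A * B)"
proof -
  assume a: "pos a" "pos (A - a)" "A \<in> Loc le" and b: "pos b" "pos (B - b)" "B \<in> Loc le"
  define C where "C = A * B"
  have CL: "C \<in> Loc le" unfolding C_def using Loc_mult a(3) b(3) by blast
  have a': "pos (a * B)" using Loc_mult_pos[OF b(3) a(1)] .
  have b': "pos (b * A)" using Loc_mult_pos[OF a(3) b(1)] .
  have ca: "pos (C - a * B)"
  proof -
    have "pos ((A - a) * B)" using Loc_mult_pos[OF b(3) a(2)] .
    then show ?thesis unfolding C_def by (simp add: algebra_simps)
  qed
  have cb: "pos (C - b * A)"
  proof -
    have "pos ((B - b) * A)" using Loc_mult_pos[OF a(3) b(2)] .
    then show ?thesis unfolding C_def by (simp add: algebra_simps)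
  qed
  have x: "pos ((C - b * A) + a * B)" using add_pos cb a' by blast
  have y: "pos ((C - a * B) + b * A)" using add_pos ca b' by blast
  have "pos (((C - b * A) + a * B) * ((C - a * B) + b * A))"
    by (rule lemmaA2[OF x y CL]) (simp add: algebra_simps)
  then have "pos ((a * B + b * A) * (a * B + b * A) * 1 + ((C - b * A) + a * B) * ((C - a * B) + b * A))"
    using add_pos sq_pos one_pos by blast
  also have "(a * B + b * A) * (a * B + b * A) * 1 + ((C - b * A) + a * B) * ((C - a * B) + b * A)
      = (4 * (a * b) + C) * C"
    unfolding C_def by (simp add: algebra_simps)
  finally show ?thesis using Loc_refl CL unfolding C_def by blast
qed

lemma numeral_pos: "pos x \<Longrightarrow> pos (numeral k * x)"
  using nat_pos[of x "numeral k"] by simp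

lemma T: "\<forall>a b A B. pos a \<longrightarrow> pos (A - a) \<longrightarrow> A \<in> Loc le \<longrightarrow> pos b \<longrightarrow> pos (B - b) \<longrightarrow> B \<in> Loc le
   \<longrightarrow> pos (of_nat (4 * 16 ^ n) * (a * b) + A * B)"
proof (induction n)
  case 0
  then show ?case using base by simp
next
  case (Suc n)
  show ?case
  proof (intro allI impI)
    fix a b A B
    assume a: "pos a" "pos (A - a)" "A \<in> Loc le" and b: "pos b" "pos (B - b)" "B \<in> Loc le"
    define c :: 'a where "c = of_nat (4 * 16 ^ n)"
    define a1 where "a1 = 4 * (a * (A - a))"
    define b1 where "b1 = 4 * (b * (B - b))"
    have a1: "pos a1" unfolding a1_def using numeral_pos lemmaA[OF a(1) a(2)] a(3) by simp
    have b1: "pos b1" unfolding b1_def using numeral_pos lemmaA[OF b(1) b(2)] b(3) by simp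
    have a1': "pos (A * A - a1)"
    proof -
      have "pos ((A - 2 * a) * (A - 2 * a))" by (rule square_pos)
      then show ?thesis unfolding a1_def by (simp add: algebra_simps)
    qed
    have b1': "pos (B * B - b1)"
    proof -
      have "pos ((B - 2 * b) * (B - 2 * b))" by (rule square_pos)
      then show ?thesis unfolding b1_def by (simp add: algebra_simps)
    qed
    have AA: "A * A \<in> Loc le" using Loc_mult a(3) by blast
    have BB: "B * B \<in> Loc le" using Loc_mult b(3) by blast
    have IH: "pos (c * (a1 * b1) + (A * A) * (B * B))"
      using Suc.IH a1 a1' AA b1 b1' BB unfolding c_def by blast
    have D: "pos (16 * ((a * b) * (a * b) * 1) + 4 * (a * a * b1) + 4 * (b * b * a1))"
      using add_pos numeral_pos sq_pos one_pos a1 b1 by metis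
    have D': "pos (of_nat (4 * 16 ^ n) * (16 * ((a * b) * (a * b) * 1) + 4 * (a * a * b1) + 4 * (b * b * a1)))"
      using nat_pos[OF D] .
    have "pos (of_nat (4 * 16 ^ n) * (16 * ((a * b) * (a * b) * 1) + 4 * (a * a * b1) + 4 * (b * b * a1))
         + (c * (a1 * b1) + (A * A) * (B * B)))"
      using add_pos[OF D' IH] .
    also have "of_nat (4 * 16 ^ n) * (16 * ((a * b) * (a * b) * 1) + 4 * (a * a * b1) + 4 * (b * b * a1))
         + (c * (a1 * b1) + (A * A) * (B * B))
       = (of_nat (4 * 16 ^ Suc n) * (a * b) + A * B) * (A * B)"
      unfolding c_def a1_def b1_def by (simp add: algebra_simps)
    finally show "pos (of_nat (4 * 16 ^ Suc n) * (a * b) + A * B)"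
      using Loc_refl Loc_mult a(3) b(3) by blast
  qed
qed

lemma main: "pos p \<Longrightarrow> pos q \<Longrightarrow> pos (p * q)"
proof -
  assume p: "pos p" and q: "pos q"
  from lz obtain A where A: "A \<in> Loc le" "le p A" unfolding localizable_def by blast
  from lz obtain B where B: "B \<in> Loc le" "le q B" unfolding localizable_def by blast
  have pA: "pos (A - p)" using A(2) le_iff by simp
  have qB: "pos (B - q)" using B(2) le_iff by simp
  have ABp: "pos (A * B)" using Loc_pos Loc_mult A(1) B(1) by blast
  have "pos (of_nat k * (p * q) + A * B)" if k: "k \<ge> 1" for k :: nat
  proof -
    define M :: nat where "M = 4 * 16 ^ k"
    have kM: "k \<le> M"
    proof -
      have "k < 2 ^ k" by (rule less_exp)
      also have "(2::nat) ^ k \<le> 16 ^ k" by (rule power_mono) auto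
      finally show ?thesis unfolding M_def by simp
    qed
    have TM: "pos (of_nat M * (p * q) + A * B)"
      using T[of k] p pA A(1) q qB B(1) unfolding M_def by blast
    have "pos (of_nat k * (of_nat M * (p * q) + A * B) + of_nat (M - k) * (A * B))"
      using add_pos nat_pos TM ABp by blast
    also have "of_nat k * (of_nat M * (p * q) + A * B) + of_nat (M - k) * (A * B)
        = of_nat M * (of_nat k * (p * q) + A * B)"
      using kM by (simp add: of_nat_diff algebra_simps)
    finally show ?thesis using torsion[of M] kM k by simp
  qed
  with ar show ?thesis unfolding archimedean_rel_def by blast
qed

end

theorem proposition5:
  fixes le :: "'a::comm_ring_1 \<Rightarrow> 'a \<Rightarrow> bool"
  assumes "partial_order_rel le"
    and "translation_invariant le"
    and "\<forall>r s. s \<in> pos_cone le \<longrightarrow> r^2 * s \<in> pos_cone le"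
    and "archimedean_rel le"
    and "localizable le"
  shows "\<forall>p q. p \<in> pos_cone le \<longrightarrow> q \<in> pos_cone le \<longrightarrow> p * q \<in> pos_cone le"
proof -
  interpret prc le using assms by unfold_locales
  show ?thesis using main by blast
qed

end
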